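(* If $0\leq\alpha<1$ and $\beta\geq2$, then $T_{\alpha,\beta}$ is transitive.
   Context: $T_{\alpha,\beta}\colon[0,1]\to[0,1]$ is given by $T_{\alpha,\beta}(x)=\beta x+\alpha-\lfloor\beta x+\alpha\rfloor$ for $x\in[0,1)$ and $T_{\alpha,\beta}(1)=\lim_{x\nearrow1}T_{\alpha,\beta}(x)$. A map $T\colon[0,1]\to[0,1]$ is transitive if there is $x\in[0,1]$ whose forward orbit $\{T^n(x)\colon n\geq0\}$ is dense in $[0,1]$. *)

theory Defs
  imports "HOL-Analysis.Analysis"
begin

definition T_ab :: "real \<Rightarrow> real \<Rightarrow> real \<Rightarrow> real" where
  "T_ab \<alpha> \<beta> x =
     (if x = 1 then Lim (at_left 1) (\<lambda>y. \<beta> * y + \<alpha> - of_int \<lfloor>\<beta> * y + \<alpha>\<rfloor>)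
      else \<beta> * x + \<alpha> - of_int \<lfloor>\<beta> * x + \<alpha>\<rfloor>)"

definition transitive_on_unit :: "(real \<Rightarrow> real) \<Rightarrow> bool" where
  "transitive_on_unit T \<longleftrightarrow>
     (\<exists>x\<in>{0..1}. {0..1} \<subseteq> closure {(T ^^ n) x | n. True})"

end

theory Submission
  imports Defs
begin


lemma T_frac: "x \<noteq> 1 \<Longrightarrow> T_ab a b x = frac (b * x + a)"
  by (simp add: T_ab_def frac_def)

lemma Tn_range: "0 \<le> x \<Longrightarrow> x < 1 \<Longrightarrow> 0 \<le> (T_ab a b ^^ n) x \<and> (T_ab a b ^^ n) x < 1"
proof (induction n)
  case 0 then show ?case by simp
next
  case (Suc n)
  then have "(T_ab a b ^^ n) x \<noteq> 1" by auto
  then show ?case by (simp add: T_frac frac_lt_1)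
qed

lemma Tn_two:
  fixes a x :: real and n :: nat
  assumes "0 \<le> x" "x < 1"
  shows "(T_ab a 2 ^^ n) x = frac (2^n * x + (2^n - 1) * a)"
  using assms
proof (induction n)
  case 0 then show ?case by (simp add: frac_eq)
next
  case (Suc n)
  define z where "z = 2^n * x + (2^n - 1) * a"
  have ne: "(T_ab a 2 ^^ n) x \<noteq> 1" using Tn_range[OF Suc.prems, where a=a and b=2 and n=n] by auto
  have "(T_ab a 2 ^^ Suc n) x = frac (2 * frac z + a)"
    using Suc ne by (simp add: T_frac z_def)
  also have "2 * frac z + a = (2 * z + a) + of_int (- 2 * \<lfloor>z\<rfloor>)"
    by (simp add: frac_def algebra_simps)
  also have "frac \<dots> = frac (2 * z + a)" by (rule frac_add_of_int_right)
  also have "2 * z + a = 2^Suc n * x + (2^Suc n - 1) * a"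
    by (simp add: z_def algebra_simps)
  finally show ?case .
qed

lemma step_real:
  fixes u v a b :: real
  assumes "u < v" "b > 0"
  shows "(\<exists>u' v' k. u \<le> u' \<and> u' < v' \<and> v' \<le> v \<and> b * u' + a = of_int k \<and> b * v' + a = of_int k + 1)
      \<or> (\<exists>u' v' k. u \<le> u' \<and> u' < v' \<and> v' \<le> v \<and> v - u \<le> 2 * (v' - u') \<and>
             (\<forall>z. u' < z \<and> z < v' \<longrightarrow> \<lfloor>b * z + a\<rfloor> = k))"
proof -
  define k0 where "k0 = \<lfloor>b * u + a\<rfloor>"
  define z1 where "z1 = (of_int k0 + 1 - a) / b"
  define z2 where "z2 = (of_int k0 + 2 - a) / b"
  have k0: "of_int k0 \<le> b * u + a" "b * u + a < of_int k0 + 1"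
    unfolding k0_def by linarith+
  have bz1: "b * z1 + a = of_int k0 + 1" unfolding z1_def using assms by simp
  have bz2: "b * z2 + a = of_int k0 + 2" unfolding z2_def using assms by simp
  have uz1: "u < z1" using k0 bz1 assms
    by (smt (verit, best) mult_less_cancel_left_pos)
  have z12: "z1 < z2" using bz1 bz2 assms
    by (smt (verit, best) mult_less_cancel_left_pos)
  show ?thesis
  proof (cases "v \<le> z1")
    case True
    have "\<forall>z. u < z \<and> z < v \<longrightarrow> \<lfloor>b * z + a\<rfloor> = k0"
    proof (intro allI impI)
      fix z assume z: "u < z \<and> z < v"
      have "b * u < b * z" "b * z < b * z1" using z True assms by auto
      then show "\<lfloor>b * z + a\<rfloor> = k0" using k0 bz1 by (simp add: floor_eq_iff)
    qed
    then show ?thesis using assms by (intro disjI2) (rule exI[of _ u], rule exI[of _ v], auto)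
  next
    case False
    show ?thesis
    proof (cases "z2 \<le> v")
      case True
      show ?thesis
        by (intro disjI1 exI[of _ z1] exI[of _ z2] exI[of _ "k0+1"]) (use True uz1 z12 bz1 bz2 in auto)
    next
      case F2: False
      show ?thesis
      proof (cases "v - u \<le> 2 * (z1 - u)")
        case True
        have "\<forall>z. u < z \<and> z < z1 \<longrightarrow> \<lfloor>b * z + a\<rfloor> = k0"
        proof (intro allI impI)
          fix z assume z: "u < z \<and> z < z1"
          have "b * u < b * z" "b * z < b * z1" using z assms by auto
          then show "\<lfloor>b * z + a\<rfloor> = k0" using k0 bz1 by (simp add: floor_eq_iff)
        qed
        then show ?thesis using assms True uz1 False
          by (intro disjI2) (rule exI[of _ u], rule exI[of _ z1], auto)
      next
        case F3: False
        have "\<forall>z. z1 < z \<and> z < v \<longrightarrow> \<lfloor>b * z + a\<rfloor> = k0 + 1"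
        proof (intro allI impI)
          fix z assume z: "z1 < z \<and> z < v"
          have "b * z1 < b * z" "b * z < b * z2" using z assms F2 by auto
          then show "\<lfloor>b * z + a\<rfloor> = k0 + 1" using bz1 bz2 by (simp add: floor_eq_iff)
        qed
        then show ?thesis using assms F3 uz1 False
          by (intro disjI2) (rule exI[of _ z1], rule exI[of _ v], auto)
      qed
    qed
  qed
qed



definition piece :: "real \<Rightarrow> real \<Rightarrow> nat \<Rightarrow> real \<Rightarrow> real \<Rightarrow> real \<Rightarrow> bool" where
  "piece al be n p q u \<longleftrightarrow> p < q \<and> (\<forall>x. p < x \<and> x < q \<longrightarrow> (T_ab al be ^^ n) x = u + be^n * (x - p))"

lemma piece_len:
  assumes "piece al be n p q u" "0 \<le> p" "q \<le> 1" "be > 0"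
  shows "be^n * (q - p) \<le> 1"
proof (rule ccontr)
  assume neg: "\<not> be^n * (q - p) \<le> 1"
  define l where "l = be^n * (q - p)"
  have l1: "l > 1" using neg l_def by simp
  have pq: "p < q" and f: "\<And>x. p < x \<Longrightarrow> x < q \<Longrightarrow> (T_ab al be ^^ n) x = u + be^n * (x - p)"
    using assms(1) unfolding piece_def by auto
  define d where "d = (q - p) * ((l - 1) / (2 * l))"
  have d0: "d > 0" using l1 pq d_def by simp
  have h: "(l - 1) / (2 * l) < 1/2" using l1 by (simp add: field_simps)
  have d1: "d < (q - p) / 2" unfolding d_def using mult_strict_left_mono[OF h, of "q - p"] pq by simp
  have bn: "be^n > 0" using assms by simp
  have bd: "be^n * d = (l - 1) / 2"
  proof -
    have "be^n * d = (be^n * (q - p)) * ((l - 1) / (2 * l))" by (simp add: d_def mult.assoc)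
    also have "\<dots> = l * ((l - 1) / (2 * l))" by (simp add: l_def)
    also have "\<dots> = (l - 1) / 2" using l1 by simp
    finally show ?thesis .
  qed
  have diff: "be^n * ((q - d) - (p + d)) = 1"
  proof -
    have "be^n * ((q - d) - (p + d)) = l - 2 * (be^n * d)" unfolding l_def by (simp add: algebra_simps)
    moreover have "be^n * d * 2 = l - 1" using bd by simp
    ultimately show ?thesis by linarith
  qed
  have r1: "0 \<le> (T_ab al be ^^ n) (p + d)" using Tn_range[of "p+d"] assms d0 d1 by auto
  have r2: "(T_ab al be ^^ n) (q - d) < 1" using Tn_range[of "q-d"] assms d0 d1 by auto
  have "(T_ab al be ^^ n) (q - d) - (T_ab al be ^^ n) (p + d) = 1"
    using f[of "q-d"] f[of "p+d"] d0 d1 diff by (simp add: algebra_simps)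
  then show False using r1 r2 by simp
qed

lemma piece_step:
  assumes "piece al be n p q u" "0 \<le> p" "q \<le> 1" "be > 0"
  shows "(\<exists>p' q'. p \<le> p' \<and> q' \<le> q \<and> piece al be (Suc n) p' q' 0 \<and> be^(Suc n) * (q' - p') = 1)
       \<or> (\<exists>p' q' u'. p \<le> p' \<and> q' \<le> q \<and> piece al be (Suc n) p' q' u' \<and>
            be * (be^n * (q - p)) \<le> 2 * (be^(Suc n) * (q' - p')))"
proof -
  have pq: "p < q" and f: "\<And>x. p < x \<Longrightarrow> x < q \<Longrightarrow> (T_ab al be ^^ n) x = u + be^n * (x - p)"
    using assms(1) unfolding piece_def by auto
  have bn: "be^n > 0" using assms by simp
  define v where "v = u + be^n * (q - p)"
  have uv: "u < v" using pq bn v_def by simp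
  \<comment> \<open>transport of a sub-image back to a sub-piece\<close>
  have sub: "p \<le> p + (s1 - u) / be^n \<and> p + (s2 - u) / be^n \<le> q \<and>
             p + (s1 - u) / be^n < p + (s2 - u) / be^n \<and>
             (\<forall>x. p + (s1 - u) / be^n < x \<and> x < p + (s2 - u) / be^n \<longrightarrow>
                (T_ab al be ^^ Suc n) x = (be * s1 + al - of_int k) + be^(Suc n) * (x - (p + (s1 - u) / be^n))) \<and>
             be^(Suc n) * ((p + (s2 - u) / be^n) - (p + (s1 - u) / be^n)) = be * (s2 - s1)"
    if s: "u \<le> s1" "s1 < s2" "s2 \<le> v" and fl: "\<forall>z. s1 < z \<and> z < s2 \<longrightarrow> \<lfloor>be * z + al\<rfloor> = k" for s1 s2 k
  proof -
    have A: "p \<le> p + (s1 - u) / be^n" using s bn by simp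
    have "s2 - u \<le> (q - p) * be^n" using s v_def by (simp add: algebra_simps)
    then have "(s2 - u) / be^n \<le> q - p" using bn by (simp add: pos_divide_le_eq)
    then have B: "p + (s2 - u) / be^n \<le> q" by simp
    have C: "p + (s1 - u) / be^n < p + (s2 - u) / be^n" using s bn by (simp add: divide_strict_right_mono)
    have D: "be^(Suc n) * ((p + (s2 - u) / be^n) - (p + (s1 - u) / be^n)) = be * (s2 - s1)"
    proof -
      have "(p + (s2 - u) / be^n) - (p + (s1 - u) / be^n) = (s2 - s1) / be^n"
        by (simp add: diff_divide_distrib)
      then show ?thesis using bn by simp
    qed
    have E: "(T_ab al be ^^ Suc n) x = (be * s1 + al - of_int k) + be^(Suc n) * (x - (p + (s1 - u) / be^n))"
      if x: "p + (s1 - u) / be^n < x \<and> x < p + (s2 - u) / be^n" for x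
    proof -
    define y where "y = u + be^n * (x - p)"
    have xp: "p < x" using x A by linarith
    have xq: "x < q" using x B by linarith
    have Ty: "(T_ab al be ^^ n) x = y" using f[OF xp xq] y_def by simp
    have "(s1 - u) / be^n < x - p" using x by simp
    then have "s1 - u < (x - p) * be^n" using bn by (simp add: pos_divide_less_eq)
    then have y1: "s1 < y" unfolding y_def by (simp add: algebra_simps)
    have "x - p < (s2 - u) / be^n" using x by simp
    then have "(x - p) * be^n < s2 - u" using bn by (simp add: pos_less_divide_eq)
    then have y2: "y < s2" unfolding y_def by (simp add: algebra_simps)
    have "y < 1" using Tn_range[where x=x and a=al and b=be and n=n] Ty xp xq assms by simp
    then have "(T_ab al be ^^ Suc n) x = be * y + al - of_int k"
      using Ty fl y1 y2 by (simp add: T_frac frac_def)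
    also have "\<dots> = (be * s1 + al - of_int k) + be^(Suc n) * (x - (p + (s1 - u) / be^n))"
    proof -
      have e: "be^(Suc n) * ((s1 - u) / be^n) = be * (s1 - u)" using bn by simp
      have "be^(Suc n) * (x - (p + (s1 - u) / be^n)) = be^(Suc n) * (x - p) - be^(Suc n) * ((s1 - u) / be^n)"
        by (simp add: algebra_simps)
      also have "\<dots> = be * (be^n * (x - p)) - be * (s1 - u)" using e by simp
      finally show ?thesis unfolding y_def by (simp add: algebra_simps)
    qed
    finally show ?thesis .
    qed
    show ?thesis using A B C D E by blast
  qed
  from step_real[OF uv assms(4), of al] show ?thesis
  proof
    assume "\<exists>u' v' k. u \<le> u' \<and> u' < v' \<and> v' \<le> v \<and> be * u' + al = of_int k \<and> be * v' + al = of_int k + 1"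
    then obtain s1 s2 k where s: "u \<le> s1" "s1 < s2" "s2 \<le> v" "be * s1 + al = of_int k" "be * s2 + al = of_int k + 1"
      by blast
    have fl: "\<forall>z. s1 < z \<and> z < s2 \<longrightarrow> \<lfloor>be * z + al\<rfloor> = k"
    proof (intro allI impI)
      fix z assume z: "s1 < z \<and> z < s2"
      have "be * s1 < be * z" "be * z < be * s2" using z assms by auto
      then show "\<lfloor>be * z + al\<rfloor> = k" using s by (simp add: floor_eq_iff)
    qed
    have len: "be * (s2 - s1) = 1" using s by (simp add: algebra_simps)
    have z: "be * s1 + al - of_int k = 0" using s by simp
    note S = sub[OF s(1-3) fl]
    have P: "piece al be (Suc n) (p + (s1 - u) / be^n) (p + (s2 - u) / be^n) 0"
      unfolding piece_def using S z by auto
    show ?thesis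
    proof (rule disjI1, intro exI conjI)
      show "p \<le> p + (s1 - u) / be^n" using S by blast
      show "p + (s2 - u) / be^n \<le> q" using S by blast
      show "piece al be (Suc n) (p + (s1 - u) / be^n) (p + (s2 - u) / be^n) 0" by (rule P)
      show "be^(Suc n) * ((p + (s2 - u) / be^n) - (p + (s1 - u) / be^n)) = 1" using S len by argo
    qed
  next
    assume "\<exists>u' v' k. u \<le> u' \<and> u' < v' \<and> v' \<le> v \<and> v - u \<le> 2 * (v' - u') \<and>
             (\<forall>z. u' < z \<and> z < v' \<longrightarrow> \<lfloor>be * z + al\<rfloor> = k)"
    then obtain s1 s2 k where s: "u \<le> s1" "s1 < s2" "s2 \<le> v" "v - u \<le> 2 * (s2 - s1)"
      and fl: "\<forall>z. s1 < z \<and> z < s2 \<longrightarrow> \<lfloor>be * z + al\<rfloor> = k" by blast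
    have "be * (v - u) \<le> be * (2 * (s2 - s1))" using s assms by simp
    then have "be * (be^n * (q - p)) \<le> 2 * (be * (s2 - s1))" using v_def by (simp add: algebra_simps)
    note S = sub[OF s(1-3) fl]
    have P: "piece al be (Suc n) (p + (s1 - u) / be^n) (p + (s2 - u) / be^n) (be * s1 + al - of_int k)"
      unfolding piece_def using S by blast
    have L: "be * (be^n * (q - p)) \<le> 2 * (be * (s2 - s1))" by fact
    show ?thesis
    proof (rule disjI2, intro exI conjI)
      show "p \<le> p + (s1 - u) / be^n" using S by blast
      show "p + (s2 - u) / be^n \<le> q" using S by blast
      show "piece al be (Suc n) (p + (s1 - u) / be^n) (p + (s2 - u) / be^n) (be * s1 + al - of_int k)" by (rule P)
      show "be * (be^n * (q - p)) \<le> 2 * (be^(Suc n) * ((p + (s2 - u) / be^n) - (p + (s1 - u) / be^n)))"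
        using S L by argo
    qed
  qed
qed



lemma growth:
  assumes "be > 0" "0 \<le> lo" "hi \<le> 1"
  shows "piece al be n p q u \<Longrightarrow> lo \<le> p \<Longrightarrow> q \<le> hi \<Longrightarrow>
    (\<exists>m p' q'. lo \<le> p' \<and> q' \<le> hi \<and> piece al be m p' q' 0 \<and> be^m * (q' - p') = 1) \<or>
    (\<exists>m p' q' u'. lo \<le> p' \<and> q' \<le> hi \<and> piece al be m p' q' u' \<and>
        (be/2)^N * (be^n * (q - p)) \<le> be^m * (q' - p'))"
proof (induction N arbitrary: n p q u)
  case 0
  then show ?case by (intro disjI2) auto
next
  case (Suc N)
  have "0 \<le> p" "q \<le> 1" using Suc.prems assms by auto
  from piece_step[OF Suc.prems(1) this assms(1)] show ?case
  proof
    assume "\<exists>p' q'. p \<le> p' \<and> q' \<le> q \<and> piece al be (Suc n) p' q' 0 \<and> be^(Suc n) * (q' - p') = 1"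
    then show ?case using Suc.prems by (intro disjI1) (meson order_trans)
  next
    assume "\<exists>p' q' u'. p \<le> p' \<and> q' \<le> q \<and> piece al be (Suc n) p' q' u' \<and>
            be * (be^n * (q - p)) \<le> 2 * (be^(Suc n) * (q' - p'))"
    then obtain p' q' u' where P: "p \<le> p'" "q' \<le> q" "piece al be (Suc n) p' q' u'"
      and L: "be * (be^n * (q - p)) \<le> 2 * (be^(Suc n) * (q' - p'))" by blast
    have lp: "lo \<le> p'" "q' \<le> hi" using P Suc.prems by auto
    from Suc.IH[OF P(3) lp] show ?case
    proof
      assume "\<exists>m p'' q''. lo \<le> p'' \<and> q'' \<le> hi \<and> piece al be m p'' q'' 0 \<and> be^m * (q'' - p'') = 1"
      then show ?case by (intro disjI1)
    next
      assume "\<exists>m p'' q'' u''. lo \<le> p'' \<and> q'' \<le> hi \<and> piece al be m p'' q'' u'' \<and>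
        (be/2)^N * (be^(Suc n) * (q' - p')) \<le> be^m * (q'' - p'')"
      then obtain m p'' q'' u'' where Q: "lo \<le> p''" "q'' \<le> hi" "piece al be m p'' q'' u''"
        and L2: "(be/2)^N * (be^(Suc n) * (q' - p')) \<le> be^m * (q'' - p'')" by blast
      have e: "(be/2) * (be^n * (q - p)) = (be * (be^n * (q - p))) / 2" by simp
      have L': "(be/2) * (be^n * (q - p)) \<le> be^(Suc n) * (q' - p')" using L e by linarith
      have "(be/2)^(Suc N) * (be^n * (q - p)) = (be/2)^N * ((be/2) * (be^n * (q - p)))"
        by (simp only: power_Suc mult.assoc mult.commute mult.left_commute)
      also have "\<dots> \<le> (be/2)^N * (be^(Suc n) * (q' - p'))"
        by (rule mult_left_mono[OF L']) (use assms in simp)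
      also have "\<dots> \<le> be^m * (q'' - p'')" by (rule L2)
      finally show ?case using Q by (intro disjI2) blast
    qed
  qed
qed

lemma hit:
  assumes "be \<ge> 2" "0 \<le> lo" "lo < hi" "hi \<le> 1" "0 \<le> r" "r < s" "s \<le> 1"
  shows "\<exists>n p q. lo \<le> p \<and> p < q \<and> q \<le> hi \<and>
           (\<forall>x. p < x \<and> x < q \<longrightarrow> r < (T_ab al be ^^ n) x \<and> (T_ab al be ^^ n) x < s)"
proof (cases "be = 2")
  case True
  obtain n where n: "2 / (hi - lo) < (2::real)^n" using real_arch_pow[of "2::real"] by auto
  have n2: "2 < 2^n * (hi - lo)" using n assms by (simp add: field_simps)
  define c where "c = (2^n - 1) * al"
  define w where "w = 2^n * lo + c"
  define m where "m = \<lfloor>w\<rfloor> + 1"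
  have m1: "w < of_int m" "of_int m \<le> w + 1" unfolding m_def by linarith+
  have pn: "(2::real)^n > 0" by simp
  define p where "p = (of_int m + r - c) / 2^n"
  define q where "q = (of_int m + s - c) / 2^n"
  have lop: "lo \<le> p"
  proof -
    have "2^n * lo \<le> of_int m + r - c" using m1 assms w_def by simp
    then show ?thesis unfolding p_def using pn by (simp add: pos_le_divide_eq algebra_simps)
  qed
  have pq: "p < q" unfolding p_def q_def using assms pn by (simp add: divide_strict_right_mono)
  have qhi: "q \<le> hi"
  proof -
    have "of_int m + s - c \<le> hi * 2^n" using m1 assms w_def n2 by (simp add: algebra_simps)
    then show ?thesis unfolding q_def using pn by (simp add: pos_divide_le_eq)
  qed
  show ?thesis
  proof (intro exI conjI allI impI)
    show "lo \<le> p" "p < q" "q \<le> hi" by fact+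
    fix x assume x: "p < x \<and> x < q"
    have x01: "0 \<le> x" "x < 1" using x lop qhi assms by auto
    define y where "y = 2^n * x + c"
    have "of_int m + r - c < x * 2^n" using x pn unfolding p_def by (simp add: pos_divide_less_eq)
    then have y1: "of_int m + r < y" unfolding y_def by (simp add: algebra_simps)
    have "x * 2^n < of_int m + s - c" using x pn unfolding q_def by (simp add: pos_less_divide_eq)
    then have y2: "y < of_int m + s" unfolding y_def by (simp add: algebra_simps)
    have fl: "\<lfloor>y\<rfloor> = m" using y1 y2 assms by (simp add: floor_eq_iff)
    have "(T_ab al be ^^ n) x = frac y" using Tn_two[OF x01, where a=al and n=n] True unfolding y_def c_def by simp
    also have "\<dots> = y - of_int m" using fl by (simp add: frac_def)
    finally show "r < (T_ab al be ^^ n) x" "(T_ab al be ^^ n) x < s" using y1 y2 by auto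
  qed
next
  case False
  then have be2: "be > 2" using assms by simp
  have bp: "be > 0" using be2 by simp
  obtain N where N: "1 / (hi - lo) < (be/2)^N" using real_arch_pow[of "be/2"] be2 by auto
  have N1: "1 < (be/2)^N * (hi - lo)" using N assms by (simp add: field_simps)
  have P0: "piece al be 0 lo hi lo" unfolding piece_def using assms by simp
  from growth[OF bp assms(2) assms(4) P0 order_refl order_refl, of N] show ?thesis
  proof
    assume "\<exists>m p' q'. lo \<le> p' \<and> q' \<le> hi \<and> piece al be m p' q' 0 \<and> be^m * (q' - p') = 1"
    then obtain m p q where Q: "lo \<le> p" "q \<le> hi" "piece al be m p q 0" "be^m * (q - p) = 1" by blast
    have pq: "p < q" and f: "\<And>x. p < x \<Longrightarrow> x < q \<Longrightarrow> (T_ab al be ^^ m) x = be^m * (x - p)"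
      using Q(3) unfolding piece_def by auto
    have bm: "be^m > 0" using bp by simp
    have qp: "q - p = 1 / be^m" using Q(4) bm bp by (simp add: eq_divide_eq mult.commute)
    show ?thesis
    proof (intro exI conjI allI impI)
      have "0 \<le> r / be^m" using assms bm by simp
      then show "lo \<le> p + r / be^m" using Q by linarith
      show "p + r / be^m < p + s / be^m" using assms bm by (simp add: divide_strict_right_mono)
      have "s / be^m \<le> 1 / be^m" using assms bm by (simp add: divide_right_mono)
      then show "p + s / be^m \<le> hi" using qp Q by linarith
      fix x assume x: "p + r / be^m < x \<and> x < p + s / be^m"
      have xp: "p < x" using x assms bm by (smt (verit) divide_nonneg_pos)
      have xq: "x < q" using x \<open>s / be^m \<le> 1 / be^m\<close> qp by linarith
      have "r / be^m < x - p" using x by simp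
      then have "r < (x - p) * be^m" using bm by (simp add: pos_divide_less_eq)
      then show "r < (T_ab al be ^^ m) x" using f[OF xp xq] by (simp add: algebra_simps)
      have "x - p < s / be^m" using x by simp
      then have "(x - p) * be^m < s" using bm by (simp add: pos_less_divide_eq)
      then show "(T_ab al be ^^ m) x < s" using f[OF xp xq] by (simp add: algebra_simps)
    qed
  next
    assume "\<exists>m p' q' u'. lo \<le> p' \<and> q' \<le> hi \<and> piece al be m p' q' u' \<and>
        (be/2)^N * (be^0 * (hi - lo)) \<le> be^m * (q' - p')"
    then obtain m p q u where Q: "lo \<le> p" "q \<le> hi" "piece al be m p q u"
      and L: "(be/2)^N * (be^0 * (hi - lo)) \<le> be^m * (q - p)" by blast
    have "be^m * (q - p) \<le> 1" using piece_len[OF Q(3)] Q assms bp by simp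
    then show ?thesis using L N1 by simp
  qed
qed



theorem propositionA1:
  fixes \<alpha> \<beta> :: real
  assumes "0 \<le> \<alpha>" and "\<alpha> < 1" and "\<beta> \<ge> 2"
  shows "transitive_on_unit (T_ab \<alpha> \<beta>)"
proof -
  define T where "T = T_ab \<alpha> \<beta>"
  define S where "S = {0..1::real}"
  define W where "W r s = {x \<in> S. \<exists>n e. e > 0 \<and> (\<forall>y\<in>S. dist y x < e \<longrightarrow> r < (T^^n) y \<and> (T^^n) y < s)}" for r s
  define R where "R = {(r,s). r \<in> \<rat> \<and> s \<in> \<rat> \<and> 0 \<le> r \<and> r < s \<and> s \<le> (1::real)}"
  define G where "G = (\<lambda>(r,s). W r s) ` R"
  have cG: "countable G"
  proof -
    have "R \<subseteq> \<rat> \<times> \<rat>" unfolding R_def by auto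
    moreover have "countable (\<rat> \<times> (\<rat>::real set))" by (intro countable_SIGMA countable_rat)
    ultimately have "countable R" by (rule countable_subset)
    then show ?thesis unfolding G_def by simp
  qed
  have openW: "openin (top_of_set S) (W r s)" for r s
    unfolding openin_euclidean_subtopology_iff
  proof (intro conjI ballI)
    show "W r s \<subseteq> S" unfolding W_def by auto
    fix x assume "x \<in> W r s"
    then obtain n e where x: "x \<in> S" "e > 0" "\<forall>y\<in>S. dist y x < e \<longrightarrow> r < (T^^n) y \<and> (T^^n) y < s"
      unfolding W_def by blast
    show "\<exists>e>0. \<forall>x'\<in>S. dist x' x < e \<longrightarrow> x' \<in> W r s"
    proof (intro exI conjI ballI impI)
      show "e > 0" by fact
      fix x' assume x': "x' \<in> S" "dist x' x < e"
      have "\<forall>y\<in>S. dist y x' < e - dist x' x \<longrightarrow> r < (T^^n) y \<and> (T^^n) y < s"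
      proof (intro ballI impI)
        fix y assume y: "y \<in> S" "dist y x' < e - dist x' x"
        have "dist y x \<le> dist y x' + dist x' x" by (rule dist_triangle)
        then have "dist y x < e" using y by linarith
        then show "r < (T^^n) y \<and> (T^^n) y < s" using x y by blast
      qed
      moreover have "e - dist x' x > 0" using x' by simp
      ultimately show "x' \<in> W r s" unfolding W_def using x' by blast
    qed
  qed
  have denseW: "S \<subseteq> closure (W r s)" if rs: "0 \<le> r" "r < s" "s \<le> 1" for r s
  proof
    fix x assume xS: "x \<in> S"
    show "x \<in> closure (W r s)" unfolding closure_approachable
    proof (intro allI impI)
      fix \<epsilon> :: real assume \<epsilon>: "\<epsilon> > 0"
      define lo where "lo = max 0 (x - \<epsilon>/2)"
      define hi where "hi = min 1 (x + \<epsilon>/2)"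
      have lh: "0 \<le> lo" "lo < hi" "hi \<le> 1" using xS \<epsilon> unfolding lo_def hi_def S_def by auto
      obtain n p q where pq: "lo \<le> p" "p < q" "q \<le> hi"
        and f: "\<forall>x. p < x \<and> x < q \<longrightarrow> r < (T_ab \<alpha> \<beta> ^^ n) x \<and> (T_ab \<alpha> \<beta> ^^ n) x < s"
        using hit[OF assms(3) lh rs, of \<alpha>] by blast
      define y where "y = (p + q) / 2"
      have yS: "y \<in> S" using pq lh unfolding y_def S_def by auto
      have "\<forall>z\<in>S. dist z y < (q - p) / 2 \<longrightarrow> r < (T^^n) z \<and> (T^^n) z < s"
      proof (intro ballI impI)
        fix z assume "z \<in> S" "dist z y < (q - p) / 2"
        then have "\<bar>z - (p + q) / 2\<bar> < (q - p) / 2" unfolding y_def dist_real_def by simp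
        then have c: "z - (p + q) / 2 < (q - p) / 2 \<and> - (z - (p + q) / 2) < (q - p) / 2"
          by (simp only: abs_less_iff)
        have "p < z" using conjunct2[OF c] by (simp add: field_simps)
        moreover have "z < q" using conjunct1[OF c] by (simp add: field_simps)
        ultimately have "p < z" "z < q" by auto
        then show "r < (T^^n) z \<and> (T^^n) z < s" using f unfolding T_def by blast
      qed
      then have "y \<in> W r s" unfolding W_def using yS pq by (auto intro!: exI[of _ n] exI[of _ "(q-p)/2"])
      moreover have "dist y x < \<epsilon>"
      proof -
        have a1: "x - \<epsilon>/2 \<le> p" "q \<le> x + \<epsilon>/2" using pq unfolding lo_def hi_def by auto
        have a2: "p < y" "y < q" using pq unfolding y_def by (simp_all add: field_simps)
        have "y - x < \<epsilon>" "x - y < \<epsilon>" using a1 a2 \<epsilon> by (simp_all add: field_simps)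
        then show ?thesis unfolding dist_real_def by (simp add: abs_less_iff)
      qed
      ultimately show "\<exists>y\<in>W r s. dist y x < \<epsilon>" by blast
    qed
  qed
  have "S \<subseteq> closure (\<Inter>G)"
  proof (rule Baire)
    show "closed S" unfolding S_def by simp
    show "countable G" by fact
    fix U assume "U \<in> G"
    then obtain r s where "(r,s) \<in> R" "U = W r s" unfolding G_def by auto
    then show "openin (top_of_set S) U \<and> S \<subseteq> closure U"
      using openW denseW unfolding R_def by auto
  qed
  moreover have "0 \<in> S" unfolding S_def by simp
  ultimately have "\<Inter>G \<noteq> {}" by auto
  then obtain x0 where x0: "x0 \<in> \<Inter>G" by blast
  have "(0,1) \<in> R" unfolding R_def by simp
  then have "W 0 1 \<in> G" unfolding G_def by force
  then have x0S: "x0 \<in> S" using x0 unfolding W_def by blast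
  have "S \<subseteq> closure {(T ^^ n) x0 | n. True}"
  proof
    fix y assume yS: "y \<in> S"
    show "y \<in> closure {(T ^^ n) x0 | n. True}" unfolding closure_approachable
    proof (intro allI impI)
      fix \<epsilon> :: real assume \<epsilon>: "\<epsilon> > 0"
      define lo where "lo = max 0 (y - \<epsilon>)"
      define hi where "hi = min 1 (y + \<epsilon>)"
      have lh: "0 \<le> lo" "lo < hi" "hi \<le> 1" using yS \<epsilon> unfolding lo_def hi_def S_def by auto
      obtain r where r: "r \<in> \<rat>" "lo < r" "r < hi" using Rats_dense_in_real[OF lh(2)] by blast
      obtain s where s: "s \<in> \<rat>" "r < s" "s < hi" using Rats_dense_in_real[OF r(3)] by blast
      have "(r,s) \<in> R" unfolding R_def using r s lh by auto
      then have "W r s \<in> G" unfolding G_def by force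
      then have "x0 \<in> W r s" using x0 by blast
      then obtain n e where "e > 0" "\<forall>z\<in>S. dist z x0 < e \<longrightarrow> r < (T^^n) z \<and> (T^^n) z < s"
        unfolding W_def by blast
      then have n: "r < (T^^n) x0" "(T^^n) x0 < s" using x0S by auto
      have "dist ((T^^n) x0) y < \<epsilon>" using n r s unfolding lo_def hi_def dist_real_def by auto
      then show "\<exists>z\<in>{(T ^^ n) x0 | n. True}. dist z y < \<epsilon>" by blast
    qed
  qed
  then show ?thesis unfolding transitive_on_unit_def T_def S_def using x0S S_def by blast
qed


end
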